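(* Let $s\geq2$, and define $f_s:\mathrm{Aut}_{s-1}(H)\to k^{\mathbb{Z}}$ by $f_s(\phi)=(\beta_n)_{n\in\mathbb{Z}}$ where $\phi(x^ny^s)=x^ny^s+\beta_n(x^{n+s}-x^n)$ for all $n\in\mathbb{Z}$. Then $f_s$ is a group homomorphism (into the additive group $k^{\mathbb{Z}}$) with $\mathrm{Ker}(f_s)=\mathrm{Aut}_s(H)$.
   Context: Let $k$ be a field and $0\neq q\in k$ not a root of unity. $H=k_q[x,x^{-1},y]$ is the $k$-algebra generated by $x,x^{-1},y$ with $xx^{-1}=x^{-1}x=1$, $yx=qxy$, a Hopf algebra with $\Delta(x)=x\otimes x$, $\Delta(y)=y\otimes x+1\otimes y$, $\varepsilon(x)=1$, $\varepsilon(y)=0$; $\{x^ny^m:n\in\mathbb{Z},m\in\mathbb{N}\}$ is a $k$-basis. $H_0=\mathrm{span}\{x^n\}$, $H(m)=H_0y^m$. $\mathrm{Aut}_c(H)$ is the group under composition of coalgebra automorphisms of $H$, and for $m\geq1$, $\mathrm{Aut}_m(H)=\{\phi\in\mathrm{Aut}_c(H):\phi(h)=h\text{ for all }h\in\sum_{i=0}^mH(i)\}$. $k^{\mathbb{Z}}$ is the group of sequences in $k$ under componentwise addition. It is a fact (proved in the paper) that for every $\phi\in\mathrm{Aut}_{s-1}(H)$ there is a unique $(\beta_n)_n\in k^{\mathbb{Z}}$ with $\phi(x^ny^s)=x^ny^s+\beta_n(x^{n+s}-x^n)$ for all $n$, so $f_s$ is well defined. *)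

theory Defs
  imports Main "HOL-Library.Poly_Mapping"
begin

text \<open>The k-vector space H with basis x^n y^m (n in Z, m in N) is modelled as the
  finitely supported functions (int * nat) =>0 k; the basis element x^n y^m is
  single (n,m) 1.  H tensor H is modelled as finitely supported functions on pairs
  of basis indices.\<close>

type_synonym 'k qH = "(int \<times> nat) \<Rightarrow>\<^sub>0 'k"
type_synonym 'k qHH = "((int \<times> nat) \<times> (int \<times> nat)) \<Rightarrow>\<^sub>0 'k"

definition mon :: "int \<Rightarrow> nat \<Rightarrow> 'k::field qH" where
  "mon n m = Poly_Mapping.single (n, m) 1"

definition scal :: "'k::field \<Rightarrow> ('a \<Rightarrow>\<^sub>0 'k) \<Rightarrow> ('a \<Rightarrow>\<^sub>0 'k)" where
  "scal c v = Poly_Mapping.map (\<lambda>a. c * a) v"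

fun qbinom :: "'k::field \<Rightarrow> nat \<Rightarrow> nat \<Rightarrow> 'k" where
  "qbinom q m 0 = 1"
| "qbinom q 0 (Suc i) = 0"
| "qbinom q (Suc m) (Suc i) = qbinom q m i + q ^ Suc i * qbinom q m (Suc i)"

definition tensor :: "'k::field qH \<Rightarrow> 'k qH \<Rightarrow> 'k qHH" where
  "tensor u v = (\<Sum>b\<in>Poly_Mapping.keys u. \<Sum>c\<in>Poly_Mapping.keys v.
      Poly_Mapping.single (b, c) (Poly_Mapping.lookup u b * Poly_Mapping.lookup v c))"

text \<open>Comultiplication on the basis:
  Delta(x^n y^m) = sum_{i<=m} [m choose i]_q x^n y^i (x) x^(n+i) y^(m-i),
  obtained from Delta(x) = x (x) x, Delta(y) = y (x) x + 1 (x) y, since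
  (1 (x) y)(y (x) x) = q (y (x) x)(1 (x) y).\<close>
definition comul_basis :: "'k::field \<Rightarrow> int \<Rightarrow> nat \<Rightarrow> 'k qHH" where
  "comul_basis q n m = (\<Sum>i\<le>m.
      Poly_Mapping.single ((n, i), (n + int i, m - i)) (qbinom q m i))"

definition comul :: "'k::field \<Rightarrow> 'k qH \<Rightarrow> 'k qHH" where
  "comul q v = (\<Sum>b\<in>Poly_Mapping.keys v. scal (Poly_Mapping.lookup v b) (comul_basis q (fst b) (snd b)))"

definition counit :: "'k::field qH \<Rightarrow> 'k" where
  "counit v = (\<Sum>b\<in>{b\<in>Poly_Mapping.keys v. snd b = 0}. Poly_Mapping.lookup v b)"

definition linear_H :: "('k::field qH \<Rightarrow> 'k qH) \<Rightarrow> bool" where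
  "linear_H \<phi> \<longleftrightarrow> (\<forall>u v. \<phi> (u + v) = \<phi> u + \<phi> v) \<and> (\<forall>c v. \<phi> (scal c v) = scal c (\<phi> v))"

text \<open>phi (x) phi applied to a tensor (for linear phi).\<close>
definition tmap :: "('k::field qH \<Rightarrow> 'k qH) \<Rightarrow> 'k qHH \<Rightarrow> 'k qHH" where
  "tmap \<phi> t = (\<Sum>p\<in>Poly_Mapping.keys t. scal (Poly_Mapping.lookup t p)
      (tensor (\<phi> (mon (fst (fst p)) (snd (fst p)))) (\<phi> (mon (fst (snd p)) (snd (snd p))))))"

definition coalg_map :: "'k::field \<Rightarrow> ('k qH \<Rightarrow> 'k qH) \<Rightarrow> bool" where
  "coalg_map q \<phi> \<longleftrightarrow> linear_H \<phi> \<and>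
     (\<forall>v. comul q (\<phi> v) = tmap \<phi> (comul q v)) \<and> (\<forall>v. counit (\<phi> v) = counit v)"

definition Aut_c :: "'k::field \<Rightarrow> ('k qH \<Rightarrow> 'k qH) set" where
  "Aut_c q = {\<phi>. bij \<phi> \<and> coalg_map q \<phi>}"

definition Hle :: "nat \<Rightarrow> 'k::field qH set" where
  "Hle m = {v. \<forall>b\<in>Poly_Mapping.keys v. snd b \<le> m}"

definition Aut_m :: "'k::field \<Rightarrow> nat \<Rightarrow> ('k qH \<Rightarrow> 'k qH) set" where
  "Aut_m q m = {\<phi>\<in>Aut_c q. \<forall>h\<in>Hle m. \<phi> h = h}"

definition f_s :: "nat \<Rightarrow> ('k::field qH \<Rightarrow> 'k qH) \<Rightarrow> int \<Rightarrow> 'k" where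
  "f_s s \<phi> = (\<lambda>n. THE \<beta>. \<phi> (mon n s) = mon n s + scal \<beta> (mon (n + int s) 0 - mon n 0))"

end

theory Submission
  imports Defs
begin

lemma lookup_scal[simp]: "Poly_Mapping.lookup (scal c v) a = c * Poly_Mapping.lookup v a"
  by (simp add: scal_def Poly_Mapping.map.rep_eq when_def)

lemma lookup_mon: "Poly_Mapping.lookup (mon n m) b = (if b = (n,m) then 1 else 0)"
  by (auto simp: mon_def lookup_single when_def)

lemma keys_mon[simp]: "Poly_Mapping.keys (mon n m :: 'k::field qH) = {(n,m)}"
  by (simp add: mon_def Poly_Mapping.keys_single)

lemma lookup_tensor: "Poly_Mapping.lookup (tensor u v) ((b::int\<times>nat),(c::int\<times>nat)) = Poly_Mapping.lookup u b * Poly_Mapping.lookup v c"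
proof -
  have "Poly_Mapping.lookup (tensor u v) (b,c) = (\<Sum>b'\<in>Poly_Mapping.keys u. \<Sum>c'\<in>Poly_Mapping.keys v.
      (if b' = b then (if c' = c then Poly_Mapping.lookup u b * Poly_Mapping.lookup v c else 0) else 0))"
    unfolding tensor_def lookup_sum
    by (intro sum.cong refl) (auto simp: lookup_single when_def)
  also have "\<dots> = Poly_Mapping.lookup u b * Poly_Mapping.lookup v c"
  proof -
    have "\<And>b'. (\<Sum>c'\<in>Poly_Mapping.keys v. (if b' = b then (if c' = c then Poly_Mapping.lookup u b * Poly_Mapping.lookup v c else 0) else 0))
       = (if b' = b then Poly_Mapping.lookup u b * Poly_Mapping.lookup v c else 0)"
      by (cases "c \<in> Poly_Mapping.keys v") (auto simp: Poly_Mapping.in_keys_iff)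
    then show ?thesis
      by (cases "b \<in> Poly_Mapping.keys u") (auto simp: Poly_Mapping.in_keys_iff)
  qed
  finally show ?thesis .
qed

lemma lookup_comul_basis: "Poly_Mapping.lookup (comul_basis q n m) ((a,i),(c,j)) =
   (if a = n \<and> i \<le> m \<and> c = n + int i \<and> j = m - i then qbinom q m i else 0)"
proof -
  have "Poly_Mapping.lookup (comul_basis q n m) ((a,i),(c,j)) = (\<Sum>i'\<in>{..m}. if i' = i then
     (if a = n \<and> c = n + int i \<and> j = m - i then qbinom q m i else 0) else 0)"
    unfolding comul_basis_def lookup_sum
    by (intro sum.cong refl) (auto simp: lookup_single when_def)
  also have "\<dots> = (if a = n \<and> i \<le> m \<and> c = n + int i \<and> j = m - i then qbinom q m i else 0)"
    by (subst sum.delta) auto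
  finally show ?thesis .
qed

lemma lookup_comul: "Poly_Mapping.lookup (comul q w) ((a,i),(c,j)) =
   (if c = a + int i then Poly_Mapping.lookup w (a, i+j) * qbinom q (i+j) i else 0)"
proof -
  have "Poly_Mapping.lookup (comul q w) ((a,i),(c,j)) = (\<Sum>b\<in>Poly_Mapping.keys w. if b = (a, i+j) then
     (if c = a + int i then Poly_Mapping.lookup w (a, i+j) * qbinom q (i+j) i else 0) else 0)"
    unfolding comul_def lookup_sum
    by (intro sum.cong refl) (auto simp: lookup_comul_basis)
  also have "\<dots> = (if c = a + int i then Poly_Mapping.lookup w (a, i+j) * qbinom q (i+j) i else 0)"
    by (subst sum.delta) (auto simp: Poly_Mapping.in_keys_iff)
  finally show ?thesis .
qed

lemma qbinom_gt: "k > m \<Longrightarrow> qbinom q m k = 0"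
proof (induction m arbitrary: k)
  case 0 then show ?case by (cases k) auto
next
  case (Suc m) then show ?case by (cases k) auto
qed

lemma qbinom_0[simp]: "qbinom q m 0 = 1" by (cases m) auto

lemma qbinom_diag[simp]: "qbinom q m m = 1"
  by (induction m) (auto simp: qbinom_gt)

lemma qbinom_1: "qbinom q m 1 * (q - 1) = q ^ m - 1"
proof (induction m)
  case 0 then show ?case by simp
next
  case (Suc m)
  have "qbinom q (Suc m) 1 = 1 + q * qbinom q m 1" by (simp add: numeral_eq_Suc)
  then show ?case using Suc by (simp add: algebra_simps)
qed

lemma scal_1[simp]: "scal 1 v = v"
  by (rule poly_mapping_eqI) simp

lemma scal_0[simp]: "scal 0 v = 0"
  by (rule poly_mapping_eqI) simp

lemma comul_mon: "comul q (mon n s) = comul_basis q n s"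
  by (simp add: comul_def lookup_mon)

lemma tmap_superset:
  assumes "finite S" "Poly_Mapping.keys t \<subseteq> S"
  shows "tmap \<phi> t = (\<Sum>p\<in>S. scal (Poly_Mapping.lookup t p)
      (tensor (\<phi> (mon (fst (fst p)) (snd (fst p)))) (\<phi> (mon (fst (snd p)) (snd (snd p))))))"
  unfolding tmap_def
  by (rule sum.mono_neutral_left) (use assms in \<open>auto simp: Poly_Mapping.in_keys_iff\<close>)

lemma keys_comul_basis: "Poly_Mapping.keys (comul_basis q n s) \<subseteq> (\<lambda>i. ((n,i),(n+int i,s-i))) ` {..s}"
proof
  fix x assume "x \<in> Poly_Mapping.keys (comul_basis q n s)"
  then have nz: "Poly_Mapping.lookup (comul_basis q n s) x \<noteq> 0" by (simp add: Poly_Mapping.in_keys_iff)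
  obtain a i c j where x: "x = ((a,i),(c,j))" by (metis prod.collapse)
  show "x \<in> (\<lambda>i. ((n,i),(n+int i,s-i))) ` {..s}"
    using nz unfolding x lookup_comul_basis by (auto split: if_splits)
qed

lemma tmap_comul_mon:
  fixes \<phi> :: "'k::field qH \<Rightarrow> 'k qH"
  assumes fx: "\<And>i m. i < s \<Longrightarrow> \<phi> (mon m i) = mon m i" and s: "s \<ge> 1"
  shows "Poly_Mapping.lookup (tmap \<phi> (comul q (mon n s))) ((a,i),(c,j)) =
     (if (a,i) = (n,0) then Poly_Mapping.lookup (\<phi> (mon n s)) (c,j) else 0)
   + (if (c,j) = (n + int s, 0) then Poly_Mapping.lookup (\<phi> (mon n s)) (a,i) else 0)
   + (if 1 \<le> i \<and> i < s \<and> a = n \<and> c = n + int i \<and> j = s - i then qbinom q s i else 0)"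
proof -
  define g where "g k = scal (qbinom q s k) (tensor (\<phi> (mon n k)) (\<phi> (mon (n + int k) (s - k))))" for k
  have inj: "inj_on (\<lambda>i. ((n,i),(n+int i,s-i))) {..s}" by (auto simp: inj_on_def)
  have "tmap \<phi> (comul q (mon n s)) = (\<Sum>p\<in>(\<lambda>i. ((n,i),(n+int i,s-i))) ` {..s}.
      scal (Poly_Mapping.lookup (comul_basis q n s) p)
      (tensor (\<phi> (mon (fst (fst p)) (snd (fst p)))) (\<phi> (mon (fst (snd p)) (snd (snd p))))))"
    unfolding comul_mon by (rule tmap_superset) (simp_all add: keys_comul_basis)
  also have "\<dots> = (\<Sum>k\<le>s. g k)"
    by (subst sum.reindex[OF inj]) (simp add: g_def lookup_comul_basis)
  finally have eq: "tmap \<phi> (comul q (mon n s)) = (\<Sum>k\<le>s. g k)" .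
  have set: "{..s} = insert 0 (insert s {1..<s})" using s by auto
  have sum_split: "(\<Sum>k\<le>s. g k) = g 0 + (g s + (\<Sum>k\<in>{1..<s}. g k))"
    unfolding set using s by (subst sum.insert) auto
  have g0: "Poly_Mapping.lookup (g 0) ((a,i),(c,j)) = (if (a,i) = (n,0) then Poly_Mapping.lookup (\<phi> (mon n s)) (c,j) else 0)"
    using fx[of 0 n] s by (simp add: g_def lookup_tensor lookup_mon)
  have gs: "Poly_Mapping.lookup (g s) ((a,i),(c,j)) = (if (c,j) = (n + int s, 0) then Poly_Mapping.lookup (\<phi> (mon n s)) (a,i) else 0)"
    using fx[of 0 "n + int s"] s by (simp add: g_def lookup_tensor lookup_mon)
  have "Poly_Mapping.lookup (\<Sum>k\<in>{1..<s}. g k) ((a,i),(c,j)) = (\<Sum>k\<in>{1..<s}. if k = i then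
       (if a = n \<and> c = n + int i \<and> j = s - i then qbinom q s i else 0) else 0)"
    unfolding lookup_sum
  proof (intro sum.cong refl)
    fix k assume k: "k \<in> {1..<s}"
    then have "\<phi> (mon n k) = mon n k" "\<phi> (mon (n + int k) (s - k)) = mon (n + int k) (s - k)"
      using fx by auto
    then show "Poly_Mapping.lookup (g k) ((a,i),(c,j)) = (if k = i then
       (if a = n \<and> c = n + int i \<and> j = s - i then qbinom q s i else 0) else 0)"
      by (auto simp: g_def lookup_tensor lookup_mon)
  qed
  also have "\<dots> = (if 1 \<le> i \<and> i < s \<and> a = n \<and> c = n + int i \<and> j = s - i then qbinom q s i else 0)"
    by (subst sum.delta) auto
  finally show ?thesis
    unfolding eq sum_split lookup_add g0 gs by simp
qed

lemma char:
  fixes \<phi> :: "'k::field qH \<Rightarrow> 'k qH"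
  assumes fx: "\<And>i m. i < s \<Longrightarrow> \<phi> (mon m i) = mon m i"
    and coal: "comul q (\<phi> (mon n s)) = tmap \<phi> (comul q (mon n s))"
    and s: "s \<ge> 2" and qs: "q ^ s \<noteq> 1"
  shows "\<phi> (mon n s) = mon n s + scal (Poly_Mapping.lookup (\<phi> (mon n s)) (n + int s, 0)) (mon (n + int s) 0 - mon n 0)"
proof -
  define p where "p = Poly_Mapping.lookup (\<phi> (mon n s))"
  have E: "(if c = a + int i then p (a, i+j) * qbinom q (i+j) i else 0) =
     (if (a,i) = (n,0) then p (c,j) else 0)
   + (if (c,j) = (n + int s, 0) then p (a,i) else 0)
   + (if 1 \<le> i \<and> i < s \<and> a = n \<and> c = n + int i \<and> j = s - i then qbinom q s i else 0)" for a i c j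
  proof -
    have "Poly_Mapping.lookup (comul q (\<phi> (mon n s))) ((a,i),(c,j)) = Poly_Mapping.lookup (tmap \<phi> (comul q (mon n s))) ((a,i),(c,j))"
      by (simp only: coal)
    moreover have "s \<ge> 1" using s by simp
    ultimately show ?thesis
      unfolding lookup_comul p_def by (subst (asm) tmap_comul_mon[OF fx]) assumption+
  qed
  have p1: "p (a,b) = 0" if "b \<ge> 1" "a \<noteq> n" for a b
    using E[of a a 0 b] that by simp
  have p2: "p (a,b) = 0" if "b \<ge> 1" "a + int b \<noteq> n + int s" for a b
    using E[of "a + int b" a b 0] that by (auto split: if_splits)
  have qb: "qbinom q s 1 \<noteq> 0" using qbinom_1[of q s] qs by auto
  have p3: "p (n,s) = 1"
    using E[of "n+1" n 1 "s-1"] s qb by (auto split: if_splits)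
  have p4: "p (a,0) = 0" if "a \<noteq> n" "a \<noteq> n + int s" for a
    using E[of a a 0 0] that by simp
  have p5: "p (n + int s, 0) + p (n,0) = 0"
    using E[of "n + int s" n 0 0] s by simp
  show ?thesis
  proof (rule poly_mapping_eqI)
    fix k :: "int \<times> nat" obtain a b where k: "k = (a,b)" by (metis prod.collapse)
    show "Poly_Mapping.lookup (\<phi> (mon n s)) k = Poly_Mapping.lookup (mon n s + scal (Poly_Mapping.lookup (\<phi> (mon n s)) (n + int s, 0)) (mon (n + int s) 0 - mon n 0)) k"
      unfolding k lookup_add lookup_scal lookup_minus lookup_mon p_def[symmetric]
    proof (cases "b = 0")
      case True
      then show "p (a, b) = (if (a, b) = (n, s) then 1 else 0) + p (n + int s, 0) * ((if (a, b) = (n + int s, 0) then 1 else 0) - (if (a, b) = (n, 0) then 1 else 0))"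
        using p4[of a] p5 s by (auto simp: algebra_simps)
    next
      case False
      then show "p (a, b) = (if (a, b) = (n, s) then 1 else 0) + p (n + int s, 0) * ((if (a, b) = (n + int s, 0) then 1 else 0) - (if (a, b) = (n, 0) then 1 else 0))"
        using p1[of b a] p2[of b a] p3 by (cases "a = n") auto
    qed
  qed
qed

lemma Hle_iff: "v \<in> Hle m \<longleftrightarrow> (\<forall>b. Poly_Mapping.lookup v b \<noteq> 0 \<longrightarrow> snd b \<le> m)"
  by (simp only: Hle_def mem_Collect_eq Ball_def Poly_Mapping.in_keys_iff)

lemma mon_Hle: "i \<le> m \<Longrightarrow> mon n i \<in> Hle m"
  by (simp add: Hle_iff lookup_mon)

lemma D_Hle: "scal c (mon (n + int s) 0 - mon n 0) \<in> Hle m"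
  by (simp add: Hle_iff lookup_mon lookup_minus)

lemma uniq:
  assumes "s \<ge> 1" "mon n s + scal a (mon (n + int s) 0 - mon n 0) = mon n s + scal b (mon (n + int s) 0 - mon n 0)"
  shows "a = b"
  using arg_cong[OF assms(2), of "\<lambda>t. Poly_Mapping.lookup t (n + int s, 0)"] assms(1)
  by (simp add: lookup_add lookup_minus lookup_mon)

lemma fs_eq:
  assumes "s \<ge> 1" "\<phi> (mon n s) = mon n s + scal \<beta> (mon (n + int s) 0 - mon n 0)"
  shows "f_s s \<phi> n = \<beta>"
  unfolding f_s_def
  by (rule the_equality) (use assms uniq in auto)

lemma Aut_char:
  fixes \<phi> :: "'k::field qH \<Rightarrow> 'k qH"
  assumes "\<phi> \<in> Aut_m q (s - 1)" "s \<ge> 2" "q ^ s \<noteq> 1"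
  shows "\<phi> (mon n s) = mon n s + scal (f_s s \<phi> n) (mon (n + int s) 0 - mon n 0)"
proof -
  have fx: "\<phi> (mon m i) = mon m i" if "i < s" for i m
  proof -
    have "mon m i \<in> Hle (s - 1)" using that by (intro mon_Hle) auto
    then show ?thesis using assms(1) by (auto simp: Aut_m_def)
  qed
  have coal: "comul q (\<phi> (mon n s)) = tmap \<phi> (comul q (mon n s))"
    using assms(1) by (auto simp: Aut_m_def Aut_c_def coalg_map_def)
  have e: "\<phi> (mon n s) = mon n s + scal (Poly_Mapping.lookup (\<phi> (mon n s)) (n + int s, 0)) (mon (n + int s) 0 - mon n 0)"
    by (rule char[OF fx coal assms(2,3)])
  then have "f_s s \<phi> n = Poly_Mapping.lookup (\<phi> (mon n s)) (n + int s, 0)"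
    using assms(2) by (intro fs_eq) auto
  then show ?thesis using e by simp
qed

lemma scal_add: "scal a v + scal b v = scal (a + b) v"
  by (rule poly_mapping_eqI) (simp add: lookup_add algebra_simps)

lemma decomp: "h = (\<Sum>b\<in>Poly_Mapping.keys h. scal (Poly_Mapping.lookup h b) (mon (fst b) (snd b)))"
proof (rule poly_mapping_eqI)
  fix k :: "int \<times> nat"
  have "Poly_Mapping.lookup (\<Sum>b\<in>Poly_Mapping.keys h. scal (Poly_Mapping.lookup h b) (mon (fst b) (snd b))) k
     = (\<Sum>b\<in>Poly_Mapping.keys h. if b = k then Poly_Mapping.lookup h k else 0)"
    unfolding lookup_sum by (intro sum.cong refl) (auto simp: lookup_mon)
  also have "\<dots> = Poly_Mapping.lookup h k"
    by (cases "k \<in> Poly_Mapping.keys h") (auto simp: Poly_Mapping.in_keys_iff)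
  finally show "Poly_Mapping.lookup h k = Poly_Mapping.lookup (\<Sum>b\<in>Poly_Mapping.keys h. scal (Poly_Mapping.lookup h b) (mon (fst b) (snd b))) k" by simp
qed

lemma add_sum:
  fixes \<phi> :: "'k::field qH \<Rightarrow> 'k qH"
  assumes add: "\<And>u v. \<phi> (u + v) = \<phi> u + \<phi> v" and "finite A"
  shows "\<phi> (\<Sum>b\<in>A. g b) = (\<Sum>b\<in>A. \<phi> (g b))"
  using assms(2)
proof (induction A rule: finite_induct)
  case empty
  have "\<phi> 0 + 0 = \<phi> 0 + \<phi> 0" using add[of 0 0] by simp
  then have "0 = \<phi> 0" by (rule add_left_imp_eq)
  then show ?case by simp
next
  case (insert x F) then show ?case by (simp add: add)
qed

theorem lemma3p6:
  fixes q :: "'k::field" and s :: nat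
  assumes "q \<noteq> 0" and "\<forall>n::nat. n > 0 \<longrightarrow> q ^ n \<noteq> 1"
    and "s \<ge> 2"
  shows "(\<forall>\<phi>\<in>Aut_m q (s - 1). \<forall>\<psi>\<in>Aut_m q (s - 1).
            f_s s (\<phi> \<circ> \<psi>) = (\<lambda>n. f_s s \<phi> n + f_s s \<psi> n))
       \<and> {\<phi>\<in>Aut_m q (s - 1). f_s s \<phi> = (\<lambda>n. 0)} = Aut_m q s"
proof -
  have s: "s \<ge> 2" by fact
  have qs: "q ^ s \<noteq> 1" using assms(2,3) by auto
  have add: "\<phi> (u + v) = \<phi> u + \<phi> v" if "\<phi> \<in> Aut_m q m" for \<phi> :: "'k qH \<Rightarrow> 'k qH" and m u v
    using that by (auto simp: Aut_m_def Aut_c_def coalg_map_def linear_H_def)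
  have scl: "\<phi> (scal c v) = scal c (\<phi> v)" if "\<phi> \<in> Aut_m q m" for \<phi> :: "'k qH \<Rightarrow> 'k qH" and m c v
    using that by (auto simp: Aut_m_def Aut_c_def coalg_map_def linear_H_def)
  have Dfix: "\<phi> (scal c (mon (n + int s) 0 - mon n 0)) = scal c (mon (n + int s) 0 - mon n 0)"
    if "\<phi> \<in> Aut_m q m" for \<phi> :: "'k qH \<Rightarrow> 'k qH" and m c n
    using that D_Hle[of c n s m] by (auto simp: Aut_m_def)
  have hom: "f_s s (\<phi> \<circ> \<psi>) = (\<lambda>n. f_s s \<phi> n + f_s s \<psi> n)"
    if \<phi>: "\<phi> \<in> Aut_m q (s - 1)" and \<psi>: "\<psi> \<in> Aut_m q (s - 1)" for \<phi> \<psi>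
  proof
    fix n
    have "(\<phi> \<circ> \<psi>) (mon n s) = \<phi> (mon n s + scal (f_s s \<psi> n) (mon (n + int s) 0 - mon n 0))"
      using Aut_char[OF \<psi> s qs] by simp
    also have "\<dots> = mon n s + scal (f_s s \<phi> n + f_s s \<psi> n) (mon (n + int s) 0 - mon n 0)"
      by (simp only: add[OF \<phi>] Dfix[OF \<phi>] Aut_char[OF \<phi> s qs] add.assoc scal_add)
    finally show "f_s s (\<phi> \<circ> \<psi>) n = f_s s \<phi> n + f_s s \<psi> n"
      using s by (intro fs_eq) auto
  qed
  have ker1: "\<phi> \<in> Aut_m q s" if \<phi>: "\<phi> \<in> Aut_m q (s - 1)" and z: "f_s s \<phi> = (\<lambda>n. 0)" for \<phi>
  proof -
    have ms: "\<phi> (mon n s) = mon n s" for n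
      using Aut_char[OF \<phi> s qs, of n] z by simp
    have mi: "\<phi> (mon n i) = mon n i" if "i \<le> s" for n i
    proof (cases "i = s")
      case True then show ?thesis using ms by simp
    next
      case False
      then have "mon n i \<in> Hle (s - 1)" using that by (intro mon_Hle) auto
      then show ?thesis using \<phi> by (auto simp: Aut_m_def)
    qed
    have "\<phi> h = h" if h: "h \<in> Hle s" for h
    proof -
      have "\<phi> h = (\<Sum>b\<in>Poly_Mapping.keys h. \<phi> (scal (Poly_Mapping.lookup h b) (mon (fst b) (snd b))))"
        by (subst decomp) (rule add_sum[OF add[OF \<phi>]], simp)
      also have "\<dots> = (\<Sum>b\<in>Poly_Mapping.keys h. scal (Poly_Mapping.lookup h b) (mon (fst b) (snd b)))"
        using h by (intro sum.cong refl) (auto simp: scl[OF \<phi>] mi Hle_def)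
      also have "\<dots> = h" by (rule decomp[symmetric])
      finally show ?thesis .
    qed
    then show ?thesis using \<phi> by (auto simp: Aut_m_def)
  qed
  have ker2: "\<phi> \<in> Aut_m q (s - 1) \<and> f_s s \<phi> = (\<lambda>n. 0)" if \<phi>: "\<phi> \<in> Aut_m q s" for \<phi>
  proof
    have "Hle (s - 1) \<subseteq> (Hle s :: 'k qH set)" by (auto simp: Hle_def)
    then show \<phi>': "\<phi> \<in> Aut_m q (s - 1)" using \<phi> by (auto simp: Aut_m_def)
    show "f_s s \<phi> = (\<lambda>n. 0)"
    proof
      fix n
      have "\<phi> (mon n s) = mon n s" using \<phi> mon_Hle[of s s n] by (auto simp: Aut_m_def)
      then have "\<phi> (mon n s) = mon n s + scal 0 (mon (n + int s) 0 - mon n 0)" by simp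
      then show "f_s s \<phi> n = 0" using s by (intro fs_eq) auto
    qed
  qed
  show ?thesis using hom ker1 ker2 by blast
qed

end
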